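(* Let $d\geqslant 1$. (1) The subset $\mathbb{N}^d$ has complements in $\mathbb{Z}^d$. (2) $\mathbb{N}^d$ has no minimal complement in $\mathbb{Z}^d$. (3) No complement of $\mathbb{N}^d$ in $\mathbb{Z}^d$ contains a minimal complement of $\mathbb{N}^d$.
   Context: $\mathbb{N}=\{0,1,2,\dots\}$. A nonempty set $M\subseteq\mathbb{Z}^d$ is a complement of $W\subseteq \mathbb{Z}^d$ if $W+M=\mathbb{Z}^d$; it is a minimal complement if no proper subset of $M$ is a complement of $W$. *)

theory Defs
  imports "HOL-Analysis.Analysis"
begin

text \<open>Z^d is modelled as the type int ^ 'd with 'd a finite (nonempty) index type.\<close>

definition sumset :: "('a::plus) set \<Rightarrow> 'a set \<Rightarrow> 'a set" where
  "sumset W M = {w + m | w m. w \<in> W \<and> m \<in> M}"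

definition is_complement :: "('a::plus) set \<Rightarrow> 'a set \<Rightarrow> bool" where
  "is_complement M W \<longleftrightarrow> M \<noteq> {} \<and> sumset W M = UNIV"

definition is_minimal_complement :: "('a::plus) set \<Rightarrow> 'a set \<Rightarrow> bool" where
  "is_minimal_complement M W \<longleftrightarrow> is_complement M W \<and>
     (\<forall>M'. M' \<subset> M \<longrightarrow> \<not> is_complement M' W)"

definition natpts :: "(int ^ 'd) set" where
  "natpts = {x. \<forall>i. x $ i \<ge> 0}"

end

theory Submission
  imports Defs
begin

lemma mem_sumset_nat:
  "x \<in> sumset natpts M \<longleftrightarrow> (\<exists>m\<in>M. \<forall>i. m $ i \<le> (x :: int ^ 'd) $ i)"
proof
  assume "x \<in> sumset natpts M"
  then obtain w m where "x = w + m" "w \<in> natpts" "m \<in> M"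
    unfolding sumset_def by blast
  then show "\<exists>m\<in>M. \<forall>i. m $ i \<le> x $ i" unfolding natpts_def by (intro bexI[of _ m]) auto
next
  assume "\<exists>m\<in>M. \<forall>i. m $ i \<le> x $ i"
  then obtain m where m: "m \<in> M" "\<forall>i. m $ i \<le> x $ i" by blast
  have "x - m \<in> natpts" using m(2) unfolding natpts_def by auto
  moreover have "x = (x - m) + m" by simp
  ultimately show "x \<in> sumset natpts M" unfolding sumset_def using m(1) by blast
qed

lemma no_min:
  fixes M :: "(int ^ 'd) set"
  shows "\<not> is_minimal_complement M natpts"
proof
  assume A: "is_minimal_complement M natpts"
  then have C: "M \<noteq> {}" "\<forall>x. \<exists>m\<in>M. \<forall>i. m $ i \<le> (x :: int ^ 'd) $ i"
    unfolding is_minimal_complement_def is_complement_def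
    using mem_sumset_nat by blast+
  then obtain m0 where m0: "m0 \<in> M" by blast
  obtain m1 where m1: "m1 \<in> M" "\<forall>i. m1 $ i \<le> (m0 - 1) $ i" using C(2) by blast
  have m1lt: "\<forall>i. m1 $ i \<le> m0 $ i" using m1(2) by (simp add: less_imp_le)
  have ne: "m1 \<noteq> m0"
  proof
    assume "m1 = m0"
    then have "m0 $ undefined \<le> m0 $ undefined - 1" using m1(2) by simp
    then show False by simp
  qed
  have "is_complement (M - {m0}) natpts"
    unfolding is_complement_def
  proof
    show "M - {m0} \<noteq> {}" using m1 ne by blast
    show "sumset natpts (M - {m0}) = UNIV"
    proof (rule set_eqI, simp add: mem_sumset_nat)
      fix x :: "int ^ 'd"
      obtain m where m: "m \<in> M" "\<forall>i. m $ i \<le> x $ i" using C(2) by blast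
      show "\<exists>m\<in>M - {m0}. \<forall>i. m $ i \<le> x $ i"
      proof (cases "m = m0")
        case True
        have "\<forall>i. m1 $ i \<le> x $ i" using m(2) m1lt True by (metis order_trans)
        then show ?thesis using m1(1) ne by blast
      next
        case False
        then show ?thesis using m by blast
      qed
    qed
  qed
  moreover have "M - {m0} \<subset> M" using m0 by blast
  ultimately show False using A unfolding is_minimal_complement_def by blast
qed

theorem corollary3p2:
  shows "(\<exists>M :: (int ^ 'd) set. is_complement M natpts)
       \<and> (\<nexists>M :: (int ^ 'd) set. is_minimal_complement M natpts)
       \<and> (\<forall>C :: (int ^ 'd) set. is_complement C natpts \<longrightarrow>
            \<not> (\<exists>M \<subseteq> C. is_minimal_complement M natpts))"
proof -
  have "is_complement (UNIV :: (int ^ 'd) set) natpts"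
    unfolding is_complement_def using mem_sumset_nat[of _ UNIV] by auto
  then show ?thesis using no_min by blast
qed

end
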